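(* Let $U$, $\widetilde U$ be groups, $\widetilde V\le \widetilde U$ a subgroup, and $I$ an index set. Let $\widetilde{\mathcal A}=\{\widetilde G_{ij},\widetilde\phi^i_{ij}\mid i\neq j\in I\}$ be a $\widetilde U$-amalgam over $I$ such that $\widetilde G_{ij}=\langle \widetilde\phi^i_{ij}(\widetilde U),\widetilde\phi^j_{ij}(\widetilde U)\rangle$ for all $i\ne j$, and let $\mathcal A=\{G_{ij},\phi^i_{ij}\mid i\neq j\in I\}$ be a $U$-amalgam over $I$. Let $\alpha=\{\pi,\rho^i,\alpha_{ij}\}:\widetilde{\mathcal A}\to\mathcal A$ be an epimorphism of amalgams, let $(\widetilde G,\{\widetilde\tau_{ij}\})$ and $(G,\{\tau_{ij}\})$ be universal enveloping groups of $\widetilde{\mathcal A}$ and $\mathcal A$, and let $\widehat\alpha:\widetilde G\to G$ be the unique epimorphism with $\widehat\alpha\circ\widetilde\tau_{ij}=\tau_{\pi(i)\pi(j)}\circ\alpha_{ij}$ for all $i\ne j$. For $i\neq j$ put $Z^i_{ij}:=\widetilde\phi^i_{ij}(\widetilde V)$, $Z_{ij}:=\langle Z^i_{ij},Z^j_{ij}\rangle$ and $A_{ij}:=\ker(\alpha_{ij})$. If $A_{ij}\le Z_{ij}\le Z(\widetilde G_{ij})$ for all $i\ne j$, then $N:=\langle \widetilde\tau_{ij}(A_{ij})\mid i\ne j\in I\rangle$ is contained in the centre of $\widetilde G$, $N=\ker\widehat\alpha$, and $\widetilde G/N\cong G$ via $\widehat\alpha$; i.e. $\widetilde G$ is a central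 extension of $G$ by $N$.
   Context: A $U$-amalgam over a set $I$ is a family $\{G_{ij},\phi^i_{ij}\mid i\ne j\in I\}$ of groups $G_{ij}$ (indexed by unordered pairs, $G_{ij}=G_{ji}$) and monomorphisms $\phi^i_{ij}:U\to G_{ij}$. An enveloping group of such an amalgam is a group $G$ with homomorphisms $\tau_{ij}:G_{ij}\to G$ such that $G$ is generated by the $\tau_{ij}(G_{ij})$ and $\tau_{ij}\circ\phi^j_{ij}=\tau_{kj}\circ\phi^j_{kj}$ for all pairwise distinct $i,j,k$; it is universal if for every enveloping group $(H,\{\tau'_{ij}\})$ there is a unique epimorphism $p:G\to H$ with $p\circ\tau_{ij}=\tau'_{ij}$ for all $i\ne j$. If $\widetilde{\mathcal A}$ is a $\widetilde U$-amalgam and $\mathcal A$ a $U$-amalgam over $I$, an epimorphism $\widetilde{\mathcal A}\to\mathcal A$ is a system $\{\pi,\rho^i,\alpha_{ij}\}$ consisting of a permutation $\pi$ of $I$, group epimorphisms $\rho^i:\widetilde U\to U$ and group epimorphisms $\alpha_{ij}:\widetilde G_{ij}\to G_{\pi(i)\pi(j)}$ with $\alpha_{ij}\circ\widetilde\phi^i_{ij}=\phi^{\pi(i)}_{\pi(i)\pi(j)}\circ\rho^{\pi(i)}$ for all $i\ne j$. *)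

theory Defs
  imports "HOL-Algebra.Algebra"
begin

definition group_center :: "('a, 'm) monoid_scheme \<Rightarrow> 'a set" where
  "group_center G = {z \<in> carrier G. \<forall>x \<in> carrier G. z \<otimes>\<^bsub>G\<^esub> x = x \<otimes>\<^bsub>G\<^esub> z}"

text \<open>A U-amalgam over I.  Gs i j is the group G_ij (required to equal Gs j i),
  phi i j is the monomorphism phi^i_ij : U \<rightarrow> G_ij (so phi j i is phi^j_ij).\<close>
definition U_amalgam ::
  "'u monoid \<Rightarrow> 'i set \<Rightarrow> ('i \<Rightarrow> 'i \<Rightarrow> 'g monoid) \<Rightarrow> ('i \<Rightarrow> 'i \<Rightarrow> 'u \<Rightarrow> 'g) \<Rightarrow> bool" where
  "U_amalgam U I Gs phi \<longleftrightarrow> group U \<and>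
     (\<forall>i\<in>I. \<forall>j\<in>I. i \<noteq> j \<longrightarrow>
        group (Gs i j) \<and> Gs i j = Gs j i \<and>
        phi i j \<in> hom U (Gs i j) \<and> inj_on (phi i j) (carrier U))"

definition enveloping_group ::
  "'u monoid \<Rightarrow> 'i set \<Rightarrow> ('i \<Rightarrow> 'i \<Rightarrow> 'g monoid) \<Rightarrow> ('i \<Rightarrow> 'i \<Rightarrow> 'u \<Rightarrow> 'g)
     \<Rightarrow> 'h monoid \<Rightarrow> ('i \<Rightarrow> 'i \<Rightarrow> 'g \<Rightarrow> 'h) \<Rightarrow> bool" where
  "enveloping_group U I Gs phi H tau \<longleftrightarrow> group H \<and>
     (\<forall>i\<in>I. \<forall>j\<in>I. i \<noteq> j \<longrightarrow>
        tau i j \<in> hom (Gs i j) H \<and> (\<forall>x \<in> carrier (Gs i j). tau i j x = tau j i x)) \<and>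
     generate H (\<Union>{tau i j ` carrier (Gs i j) | i j. i \<in> I \<and> j \<in> I \<and> i \<noteq> j}) = carrier H \<and>
     (\<forall>i\<in>I. \<forall>j\<in>I. \<forall>k\<in>I. i \<noteq> j \<and> j \<noteq> k \<and> i \<noteq> k \<longrightarrow>
        (\<forall>u \<in> carrier U. tau i j (phi j i u) = tau k j (phi j k u)))"

definition env_epi ::
  "'i set \<Rightarrow> ('i \<Rightarrow> 'i \<Rightarrow> 'g monoid) \<Rightarrow> 'e monoid \<Rightarrow> ('i \<Rightarrow> 'i \<Rightarrow> 'g \<Rightarrow> 'e)
     \<Rightarrow> 'h monoid \<Rightarrow> ('i \<Rightarrow> 'i \<Rightarrow> 'g \<Rightarrow> 'h) \<Rightarrow> ('e \<Rightarrow> 'h) \<Rightarrow> bool" where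
  "env_epi I Gs G tau H tau' p \<longleftrightarrow> p \<in> hom G H \<and> p ` carrier G = carrier H \<and>
     (\<forall>i\<in>I. \<forall>j\<in>I. i \<noteq> j \<longrightarrow> (\<forall>x \<in> carrier (Gs i j). p (tau i j x) = tau' i j x))"

text \<open>Universal enveloping group, where the universal property is quantified over
  all enveloping groups whose elements have type 'h (HOL cannot quantify over types
  inside a formula).\<close>
definition universal_enveloping ::
  "'h itself \<Rightarrow> 'u monoid \<Rightarrow> 'i set \<Rightarrow> ('i \<Rightarrow> 'i \<Rightarrow> 'g monoid) \<Rightarrow> ('i \<Rightarrow> 'i \<Rightarrow> 'u \<Rightarrow> 'g)
     \<Rightarrow> 'e monoid \<Rightarrow> ('i \<Rightarrow> 'i \<Rightarrow> 'g \<Rightarrow> 'e) \<Rightarrow> bool" where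
  "universal_enveloping (T :: 'h itself) U I Gs phi G tau \<longleftrightarrow>
     enveloping_group U I Gs phi G tau \<and>
     (\<forall>(H :: 'h monoid) tau'. enveloping_group U I Gs phi H tau' \<longrightarrow>
        (\<exists>p. env_epi I Gs G tau H tau' p) \<and>
        (\<forall>p q. env_epi I Gs G tau H tau' p \<and> env_epi I Gs G tau H tau' q \<longrightarrow>
                (\<forall>x \<in> carrier G. p x = q x)))"

definition amalgam_epi ::
  "'v monoid \<Rightarrow> ('i \<Rightarrow> 'i \<Rightarrow> 'gt monoid) \<Rightarrow> ('i \<Rightarrow> 'i \<Rightarrow> 'v \<Rightarrow> 'gt)
   \<Rightarrow> 'u monoid \<Rightarrow> ('i \<Rightarrow> 'i \<Rightarrow> 'g monoid) \<Rightarrow> ('i \<Rightarrow> 'i \<Rightarrow> 'u \<Rightarrow> 'g) \<Rightarrow> 'i set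
   \<Rightarrow> ('i \<Rightarrow> 'i) \<Rightarrow> ('i \<Rightarrow> 'v \<Rightarrow> 'u) \<Rightarrow> ('i \<Rightarrow> 'i \<Rightarrow> 'gt \<Rightarrow> 'g) \<Rightarrow> bool" where
  "amalgam_epi Ut Gt phit U Gs phi I \<pi> rho alpha \<longleftrightarrow>
     bij_betw \<pi> I I \<and>
     (\<forall>i\<in>I. rho i \<in> hom Ut U \<and> rho i ` carrier Ut = carrier U) \<and>
     (\<forall>i\<in>I. \<forall>j\<in>I. i \<noteq> j \<longrightarrow>
        alpha i j \<in> hom (Gt i j) (Gs (\<pi> i) (\<pi> j)) \<and>
        alpha i j ` carrier (Gt i j) = carrier (Gs (\<pi> i) (\<pi> j)) \<and>
        (\<forall>x \<in> carrier (Gt i j). alpha i j x = alpha j i x) \<and>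
        (\<forall>u \<in> carrier Ut. alpha i j (phit i j u) = phi (\<pi> i) (\<pi> j) (rho (\<pi> i) u)))"

end

theory Submission
  imports Defs
begin


lemma hom_agree_generate:
  assumes G: "group G" and H: "group H" and f: "f \<in> hom G H" and g: "g \<in> hom G H"
    and S: "S \<subseteq> carrier G" and agree: "\<And>s. s \<in> S \<Longrightarrow> f s = g s" and x: "x \<in> generate G S"
  shows "f x = g x"
  using x
proof (induction rule: generate.induct)
  interpret F: group_hom G H f using G H f by (simp add: group_hom_def group_hom_axioms_def)
  interpret Gg: group_hom G H g using G H g by (simp add: group_hom_def group_hom_axioms_def)
  { case one show ?case by simp }
  { case (incl h) then show ?case by (rule agree) }
  { case (inv h) then have "h \<in> carrier G" using S by auto
    then show ?case using inv agree by simp }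
  { case (eng h1 h2)
    then have "h1 \<in> carrier G" "h2 \<in> carrier G" using group.generate_in_carrier[OF G S] by auto
    then show ?case using eng by simp }
qed

lemma center_subgroup:
  assumes G: "group G" shows "subgroup (group_center G) G"
proof -
  interpret group G by fact
  show ?thesis
  proof
    show "group_center G \<subseteq> carrier G" by (auto simp: group_center_def)
    show "\<one>\<^bsub>G\<^esub> \<in> group_center G" by (auto simp: group_center_def)
    fix x y assume x: "x \<in> group_center G" and y: "y \<in> group_center G"
    then show "x \<otimes>\<^bsub>G\<^esub> y \<in> group_center G"
    proof -
      have xc: "x \<in> carrier G" and xz: "\<And>w. w \<in> carrier G \<Longrightarrow> x \<otimes>\<^bsub>G\<^esub> w = w \<otimes>\<^bsub>G\<^esub> x"
        using x by (auto simp: group_center_def)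
      have yc: "y \<in> carrier G" and yz: "\<And>w. w \<in> carrier G \<Longrightarrow> y \<otimes>\<^bsub>G\<^esub> w = w \<otimes>\<^bsub>G\<^esub> y"
        using y by (auto simp: group_center_def)
      have "x \<otimes>\<^bsub>G\<^esub> y \<otimes>\<^bsub>G\<^esub> w = w \<otimes>\<^bsub>G\<^esub> (x \<otimes>\<^bsub>G\<^esub> y)" if w: "w \<in> carrier G" for w
      proof -
        have "x \<otimes>\<^bsub>G\<^esub> y \<otimes>\<^bsub>G\<^esub> w = x \<otimes>\<^bsub>G\<^esub> (w \<otimes>\<^bsub>G\<^esub> y)" using xc yc w yz[OF w] by (simp add: m_assoc)
        also have "\<dots> = (x \<otimes>\<^bsub>G\<^esub> w) \<otimes>\<^bsub>G\<^esub> y" using xc yc w by (simp add: m_assoc)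
        also have "\<dots> = w \<otimes>\<^bsub>G\<^esub> (x \<otimes>\<^bsub>G\<^esub> y)" using xc yc w xz[OF w] by (simp add: m_assoc)
        finally show ?thesis .
      qed
      then show ?thesis using xc yc by (auto simp: group_center_def)
    qed
    show "inv\<^bsub>G\<^esub> x \<in> group_center G"
    proof -
      have xc: "x \<in> carrier G" and xz: "\<And>z. z \<in> carrier G \<Longrightarrow> x \<otimes>\<^bsub>G\<^esub> z = z \<otimes>\<^bsub>G\<^esub> x"
        using x by (auto simp: group_center_def)
      have "inv\<^bsub>G\<^esub> x \<otimes>\<^bsub>G\<^esub> z = z \<otimes>\<^bsub>G\<^esub> inv\<^bsub>G\<^esub> x" if z: "z \<in> carrier G" for z
      proof -
        have "inv\<^bsub>G\<^esub> x \<otimes>\<^bsub>G\<^esub> z = inv\<^bsub>G\<^esub> x \<otimes>\<^bsub>G\<^esub> z \<otimes>\<^bsub>G\<^esub> (x \<otimes>\<^bsub>G\<^esub> inv\<^bsub>G\<^esub> x)" using xc z by (simp add: m_assoc)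
        also have "\<dots> = inv\<^bsub>G\<^esub> x \<otimes>\<^bsub>G\<^esub> (z \<otimes>\<^bsub>G\<^esub> x) \<otimes>\<^bsub>G\<^esub> inv\<^bsub>G\<^esub> x" using xc z by (simp add: m_assoc)
        also have "\<dots> = inv\<^bsub>G\<^esub> x \<otimes>\<^bsub>G\<^esub> (x \<otimes>\<^bsub>G\<^esub> z) \<otimes>\<^bsub>G\<^esub> inv\<^bsub>G\<^esub> x" using xz[OF z] by simp
        also have "\<dots> = z \<otimes>\<^bsub>G\<^esub> inv\<^bsub>G\<^esub> x" using xc z by (simp add: m_assoc[symmetric])
        finally show ?thesis .
      qed
      then show ?thesis using xc by (auto simp: group_center_def)
    qed
  qed
qed

lemma commute_generate:
  assumes G: "group G" and z: "z \<in> carrier G" and S: "S \<subseteq> carrier G"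
    and c: "\<And>s. s \<in> S \<Longrightarrow> z \<otimes>\<^bsub>G\<^esub> s = s \<otimes>\<^bsub>G\<^esub> z" and x: "x \<in> generate G S"
  shows "z \<otimes>\<^bsub>G\<^esub> x = x \<otimes>\<^bsub>G\<^esub> z"
proof -
  interpret group G by fact
  let ?C = "{y \<in> carrier G. z \<otimes>\<^bsub>G\<^esub> y = y \<otimes>\<^bsub>G\<^esub> z}"
  have "subgroup ?C G"
  proof
    show "?C \<subseteq> carrier G" by auto
    show "\<one>\<^bsub>G\<^esub> \<in> ?C" using z by auto
    fix a b assume a: "a \<in> ?C" and b: "b \<in> ?C"
    then show "a \<otimes>\<^bsub>G\<^esub> b \<in> ?C"
    proof -
      have ac: "a \<in> carrier G" and az: "z \<otimes>\<^bsub>G\<^esub> a = a \<otimes>\<^bsub>G\<^esub> z" using a by auto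
      have bc: "b \<in> carrier G" and bz: "z \<otimes>\<^bsub>G\<^esub> b = b \<otimes>\<^bsub>G\<^esub> z" using b by auto
      have "z \<otimes>\<^bsub>G\<^esub> (a \<otimes>\<^bsub>G\<^esub> b) = (z \<otimes>\<^bsub>G\<^esub> a) \<otimes>\<^bsub>G\<^esub> b" using ac bc z by (simp add: m_assoc)
      also have "\<dots> = (a \<otimes>\<^bsub>G\<^esub> z) \<otimes>\<^bsub>G\<^esub> b" using az by simp
      also have "\<dots> = a \<otimes>\<^bsub>G\<^esub> (z \<otimes>\<^bsub>G\<^esub> b)" using ac bc z by (simp add: m_assoc)
      also have "\<dots> = a \<otimes>\<^bsub>G\<^esub> (b \<otimes>\<^bsub>G\<^esub> z)" using bz by simp
      also have "\<dots> = a \<otimes>\<^bsub>G\<^esub> b \<otimes>\<^bsub>G\<^esub> z" using ac bc z by (simp add: m_assoc)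
      finally have e: "z \<otimes>\<^bsub>G\<^esub> (a \<otimes>\<^bsub>G\<^esub> b) = a \<otimes>\<^bsub>G\<^esub> b \<otimes>\<^bsub>G\<^esub> z" .
      have "a \<otimes>\<^bsub>G\<^esub> b \<in> carrier G" using a b by blast
      then show ?thesis using e by blast
    qed
    have ac: "a \<in> carrier G" and az: "z \<otimes>\<^bsub>G\<^esub> a = a \<otimes>\<^bsub>G\<^esub> z" using a by auto
    have "z \<otimes>\<^bsub>G\<^esub> inv\<^bsub>G\<^esub> a = inv\<^bsub>G\<^esub> a \<otimes>\<^bsub>G\<^esub> (a \<otimes>\<^bsub>G\<^esub> z) \<otimes>\<^bsub>G\<^esub> inv\<^bsub>G\<^esub> a" using ac z by (simp add: m_assoc[symmetric])
    also have "\<dots> = inv\<^bsub>G\<^esub> a \<otimes>\<^bsub>G\<^esub> (z \<otimes>\<^bsub>G\<^esub> a) \<otimes>\<^bsub>G\<^esub> inv\<^bsub>G\<^esub> a" using az by simp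
    also have "\<dots> = inv\<^bsub>G\<^esub> a \<otimes>\<^bsub>G\<^esub> z" using ac z by (simp add: m_assoc)
    finally show "inv\<^bsub>G\<^esub> a \<in> ?C" using ac by auto
  qed
  moreover have "S \<subseteq> ?C" using S c by auto
  ultimately have "generate G S \<subseteq> ?C" by (meson generate_subgroup_incl)
  then show ?thesis using x by auto
qed


theorem mainTheorem1:
  fixes U :: "'u monoid" and Ut :: "'v monoid" and Vt :: "'v set" and I :: "'i set"
    and Gt :: "'i \<Rightarrow> 'i \<Rightarrow> 'gt monoid" and phit :: "'i \<Rightarrow> 'i \<Rightarrow> 'v \<Rightarrow> 'gt"
    and Gs :: "'i \<Rightarrow> 'i \<Rightarrow> 'g monoid" and phi :: "'i \<Rightarrow> 'i \<Rightarrow> 'u \<Rightarrow> 'g"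
    and \<pi> :: "'i \<Rightarrow> 'i" and rho :: "'i \<Rightarrow> 'v \<Rightarrow> 'u" and alpha :: "'i \<Rightarrow> 'i \<Rightarrow> 'gt \<Rightarrow> 'g"
    and Gtil :: "'et monoid" and taut :: "'i \<Rightarrow> 'i \<Rightarrow> 'gt \<Rightarrow> 'et"
    and G :: "'e monoid" and tau :: "'i \<Rightarrow> 'i \<Rightarrow> 'g \<Rightarrow> 'e"
    and alphahat :: "'et \<Rightarrow> 'e"
  assumes groupU: "group U" and groupUt: "group Ut"
    and Vt: "subgroup Vt Ut"
    and At: "U_amalgam Ut I Gt phit"
    and At_gen: "\<And>i j. i \<in> I \<Longrightarrow> j \<in> I \<Longrightarrow> i \<noteq> j \<Longrightarrow>
        carrier (Gt i j) = generate (Gt i j) (phit i j ` carrier Ut \<union> phit j i ` carrier Ut)"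
    and A: "U_amalgam U I Gs phi"
    and epi: "amalgam_epi Ut Gt phit U Gs phi I \<pi> rho alpha"
    and univ_t1: "universal_enveloping TYPE('e) Ut I Gt phit Gtil taut"
    and univ_t2: "universal_enveloping TYPE('et set) Ut I Gt phit Gtil taut"
    and univ1: "universal_enveloping TYPE('e) U I Gs phi G tau"
    and univ2: "universal_enveloping TYPE('et set) U I Gs phi G tau"
    and alphahat: "alphahat \<in> hom Gtil G" "alphahat ` carrier Gtil = carrier G"
    and alphahat_comm: "\<And>i j x. i \<in> I \<Longrightarrow> j \<in> I \<Longrightarrow> i \<noteq> j \<Longrightarrow> x \<in> carrier (Gt i j) \<Longrightarrow>
        alphahat (taut i j x) = tau (\<pi> i) (\<pi> j) (alpha i j x)"
    and central: "\<And>i j. i \<in> I \<Longrightarrow> j \<in> I \<Longrightarrow> i \<noteq> j \<Longrightarrow>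
        kernel (Gt i j) (Gs (\<pi> i) (\<pi> j)) (alpha i j)
          \<subseteq> generate (Gt i j) (phit i j ` Vt \<union> phit j i ` Vt) \<and>
        generate (Gt i j) (phit i j ` Vt \<union> phit j i ` Vt) \<subseteq> group_center (Gt i j)"
  shows "let N = generate Gtil (\<Union>{taut i j ` kernel (Gt i j) (Gs (\<pi> i) (\<pi> j)) (alpha i j)
                                   | i j. i \<in> I \<and> j \<in> I \<and> i \<noteq> j})
         in N \<subseteq> group_center Gtil \<and> N = kernel Gtil G alphahat \<and>
            (\<lambda>C. the_elem (alphahat ` C)) \<in> iso (Gtil Mod N) G"
proof -
  have envt: "enveloping_group Ut I Gt phit Gtil taut"
    using univ_t1 by (simp add: universal_enveloping_def)
  interpret GT: group Gtil using envt by (simp add: enveloping_group_def)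
  have env: "enveloping_group U I Gs phi G tau"
    using univ1 by (simp add: universal_enveloping_def)
  interpret GG: group G using env by (simp add: enveloping_group_def)
  have Gt_grp: "\<And>i j. i \<in> I \<Longrightarrow> j \<in> I \<Longrightarrow> i \<noteq> j \<Longrightarrow> group (Gt i j)"
    using At by (simp add: U_amalgam_def)
  have Gt_sym: "\<And>i j. i \<in> I \<Longrightarrow> j \<in> I \<Longrightarrow> i \<noteq> j \<Longrightarrow> Gt i j = Gt j i"
    using At by (simp add: U_amalgam_def)
  have phit_hom: "\<And>i j. i \<in> I \<Longrightarrow> j \<in> I \<Longrightarrow> i \<noteq> j \<Longrightarrow> phit i j \<in> hom Ut (Gt i j)"
    using At by (simp add: U_amalgam_def)
  have phit_c: "\<And>i j u. i \<in> I \<Longrightarrow> j \<in> I \<Longrightarrow> i \<noteq> j \<Longrightarrow> u \<in> carrier Ut \<Longrightarrow> phit i j u \<in> carrier (Gt i j)"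
    by (rule hom_in_carrier[OF phit_hom])
  have phit_c2: "\<And>i j u. i \<in> I \<Longrightarrow> j \<in> I \<Longrightarrow> i \<noteq> j \<Longrightarrow> u \<in> carrier Ut \<Longrightarrow> phit j i u \<in> carrier (Gt i j)"
  proof -
    fix i j u assume "i \<in> I" "j \<in> I" "i \<noteq> j" "u \<in> carrier Ut"
    then have "phit j i u \<in> carrier (Gt j i)" by (intro phit_c) auto
    then show "phit j i u \<in> carrier (Gt i j)" using Gt_sym \<open>i \<in> I\<close> \<open>j \<in> I\<close> \<open>i \<noteq> j\<close> by simp
  qed
  have Gs_grp: "\<And>k l. k \<in> I \<Longrightarrow> l \<in> I \<Longrightarrow> k \<noteq> l \<Longrightarrow> group (Gs k l)"
    using A by (simp add: U_amalgam_def)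
  have taut_hom: "\<And>i j. i \<in> I \<Longrightarrow> j \<in> I \<Longrightarrow> i \<noteq> j \<Longrightarrow> taut i j \<in> hom (Gt i j) Gtil"
    using envt by (simp add: enveloping_group_def)
  have taut_gh: "\<And>i j. i \<in> I \<Longrightarrow> j \<in> I \<Longrightarrow> i \<noteq> j \<Longrightarrow> group_hom (Gt i j) Gtil (taut i j)"
    using taut_hom Gt_grp GT.is_group by (simp add: group_hom_def group_hom_axioms_def)
  have taut_sym: "\<And>i j x. i \<in> I \<Longrightarrow> j \<in> I \<Longrightarrow> i \<noteq> j \<Longrightarrow> x \<in> carrier (Gt i j) \<Longrightarrow> taut i j x = taut j i x"
  proof -
    have "\<forall>i\<in>I. \<forall>j\<in>I. i \<noteq> j \<longrightarrow>
        taut i j \<in> hom (Gt i j) Gtil \<and> (\<forall>x \<in> carrier (Gt i j). taut i j x = taut j i x)"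
      using envt unfolding enveloping_group_def by (elim conjE)
    then show "\<And>i j x. i \<in> I \<Longrightarrow> j \<in> I \<Longrightarrow> i \<noteq> j \<Longrightarrow> x \<in> carrier (Gt i j) \<Longrightarrow> taut i j x = taut j i x"
      by blast
  qed
  define S where "S = \<Union>{taut i j ` carrier (Gt i j) | i j. i \<in> I \<and> j \<in> I \<and> i \<noteq> j}"
  have Gtil_gen: "generate Gtil S = carrier Gtil"
    using envt by (simp add: enveloping_group_def S_def)
  have S_sub: "S \<subseteq> carrier Gtil"
  proof
    fix s assume "s \<in> S"
    then obtain i j x where "i \<in> I" "j \<in> I" "i \<noteq> j" "x \<in> carrier (Gt i j)" "s = taut i j x"
      unfolding S_def by blast
    then show "s \<in> carrier Gtil" using hom_in_carrier[OF taut_hom] by simp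
  qed
  have taut_rel: "\<And>i j k u. i \<in> I \<Longrightarrow> j \<in> I \<Longrightarrow> k \<in> I \<Longrightarrow> i \<noteq> j \<Longrightarrow> j \<noteq> k \<Longrightarrow> i \<noteq> k \<Longrightarrow> u \<in> carrier Ut
      \<Longrightarrow> taut i j (phit j i u) = taut k j (phit j k u)"
  proof -
    have "\<forall>i\<in>I. \<forall>j\<in>I. \<forall>k\<in>I. i \<noteq> j \<and> j \<noteq> k \<and> i \<noteq> k \<longrightarrow>
        (\<forall>u \<in> carrier Ut. taut i j (phit j i u) = taut k j (phit j k u))"
      using envt unfolding enveloping_group_def by (elim conjE)
    then show "\<And>i j k u. i \<in> I \<Longrightarrow> j \<in> I \<Longrightarrow> k \<in> I \<Longrightarrow> i \<noteq> j \<Longrightarrow> j \<noteq> k \<Longrightarrow> i \<noteq> k \<Longrightarrow> u \<in> carrier Ut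
      \<Longrightarrow> taut i j (phit j i u) = taut k j (phit j k u)" by blast
  qed
  have taut_psi: "\<And>i j k w. i \<in> I \<Longrightarrow> j \<in> I \<Longrightarrow> k \<in> I \<Longrightarrow> i \<noteq> j \<Longrightarrow> k \<noteq> j \<Longrightarrow> w \<in> carrier Ut
      \<Longrightarrow> taut i j (phit j i w) = taut k j (phit j k w)"
  proof -
    fix i j k w assume "i \<in> I" "j \<in> I" "k \<in> I" "i \<noteq> j" "k \<noteq> j" "w \<in> carrier Ut"
    then show "taut i j (phit j i w) = taut k j (phit j k w)"
      by (cases "i = k") (simp, rule taut_rel, auto)
  qed
  have Vt_sub: "Vt \<subseteq> carrier Ut" using Vt by (rule subgroup.subset)
  have central_elt: "\<And>i j v. i \<in> I \<Longrightarrow> j \<in> I \<Longrightarrow> i \<noteq> j \<Longrightarrow> v \<in> Vt \<Longrightarrow> phit i j v \<in> group_center (Gt i j)"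
  proof -
    fix i j v assume "i \<in> I" "j \<in> I" "i \<noteq> j" "v \<in> Vt"
    then show "phit i j v \<in> group_center (Gt i j)"
      using central[of i j] generate.incl[of "phit i j v" "phit i j ` Vt \<union> phit j i ` Vt" "Gt i j"] by blast
  qed
  have comm_in: "\<And>i j x y. i \<in> I \<Longrightarrow> j \<in> I \<Longrightarrow> i \<noteq> j \<Longrightarrow> x \<in> group_center (Gt i j) \<Longrightarrow> y \<in> carrier (Gt i j)
      \<Longrightarrow> taut i j x \<otimes>\<^bsub>Gtil\<^esub> taut i j y = taut i j y \<otimes>\<^bsub>Gtil\<^esub> taut i j x"
  proof -
    fix i j x y assume ij: "i \<in> I" "j \<in> I" "i \<noteq> j" and x: "x \<in> group_center (Gt i j)" and y: "y \<in> carrier (Gt i j)"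
    have xc: "x \<in> carrier (Gt i j)" and xy: "x \<otimes>\<^bsub>Gt i j\<^esub> y = y \<otimes>\<^bsub>Gt i j\<^esub> x"
      using x y by (auto simp: group_center_def)
    show "taut i j x \<otimes>\<^bsub>Gtil\<^esub> taut i j y = taut i j y \<otimes>\<^bsub>Gtil\<^esub> taut i j x"
      using hom_mult[OF taut_hom[OF ij] xc y] hom_mult[OF taut_hom[OF ij] y xc] xy by simp
  qed
  have C3: "\<And>i j v k l u. i \<in> I \<Longrightarrow> j \<in> I \<Longrightarrow> i \<noteq> j \<Longrightarrow> k \<in> I \<Longrightarrow> l \<in> I \<Longrightarrow> k \<noteq> l \<Longrightarrow> v \<in> Vt \<Longrightarrow> u \<in> carrier Ut
     \<Longrightarrow> taut i j (phit i j v) \<otimes>\<^bsub>Gtil\<^esub> taut k l (phit k l u) = taut k l (phit k l u) \<otimes>\<^bsub>Gtil\<^esub> taut i j (phit i j v)"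
  proof -
    fix i j v k l u assume i: "i \<in> I" and j: "j \<in> I" and ij: "i \<noteq> j" and k: "k \<in> I" and l: "l \<in> I" and kl: "k \<noteq> l"
      and v: "v \<in> Vt" and u: "u \<in> carrier Ut"
    have vU: "v \<in> carrier Ut" using v Vt_sub by auto
    have d: "taut k l (phit k l u) = taut l k (phit k l u)"
      using taut_sym[OF k l kl] phit_c[OF k l kl u] by simp
    show "taut i j (phit i j v) \<otimes>\<^bsub>Gtil\<^esub> taut k l (phit k l u) = taut k l (phit k l u) \<otimes>\<^bsub>Gtil\<^esub> taut i j (phit i j v)"
    proof (cases "k = i")
      case True
      have "taut l k (phit k l u) = taut j k (phit k j u)"
        using taut_psi[OF l k j _ _ u] kl ij True by auto
      also have "\<dots> = taut i j (phit i j u)"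
        using True taut_sym[OF i j ij] phit_c[OF i j ij u] by simp
      finally have dd: "taut k l (phit k l u) = taut i j (phit i j u)" using d by simp
      show ?thesis unfolding dd
        by (rule comm_in[OF i j ij central_elt[OF i j ij v] phit_c[OF i j ij u]])
    next
      case False
      have "taut i j (phit i j v) = taut j i (phit i j v)"
        using taut_sym[OF i j ij] phit_c[OF i j ij vU] by simp
      also have "\<dots> = taut k i (phit i k v)"
        using taut_psi[OF j i k _ _ vU] ij False by auto
      also have "\<dots> = taut i k (phit i k v)"
        using taut_sym[OF i k] phit_c[OF i k _ vU] False by (metis Gt_sym)
      finally have cc: "taut i j (phit i j v) = taut i k (phit i k v)" .
      have "taut l k (phit k l u) = taut i k (phit k i u)"
        using taut_psi[OF l k i _ _ u] kl False by auto
      then have dd: "taut k l (phit k l u) = taut i k (phit k i u)" using d by simp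
      have ik: "i \<noteq> k" using False by auto
      show ?thesis unfolding cc dd
        by (rule comm_in[OF i k ik central_elt[OF i k ik v] phit_c2[OF i k ik u]])
    qed
  qed
  have C2: "\<And>i j v. i \<in> I \<Longrightarrow> j \<in> I \<Longrightarrow> i \<noteq> j \<Longrightarrow> v \<in> Vt \<Longrightarrow> taut i j (phit i j v) \<in> group_center Gtil"
  proof -
    fix i j v assume i: "i \<in> I" and j: "j \<in> I" and ij: "i \<noteq> j" and v: "v \<in> Vt"
    have vU: "v \<in> carrier Ut" using v Vt_sub by auto
    let ?c = "taut i j (phit i j v)"
    have cc: "?c \<in> carrier Gtil" using hom_in_carrier[OF taut_hom[OF i j ij] phit_c[OF i j ij vU]] .
    have Scomm: "?c \<otimes>\<^bsub>Gtil\<^esub> s = s \<otimes>\<^bsub>Gtil\<^esub> ?c" if s: "s \<in> S" for s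
    proof -
      obtain k l y where k: "k \<in> I" and l: "l \<in> I" and kl: "k \<noteq> l" and y: "y \<in> carrier (Gt k l)" and sy: "s = taut k l y"
        using s unfolding S_def by blast
      let ?T = "phit k l ` carrier Ut \<union> phit l k ` carrier Ut"
      have T: "?T \<subseteq> carrier (Gt k l)" using phit_c[OF k l kl] phit_c2[OF k l kl] by auto
      have "y \<in> generate (Gt k l) ?T" using y At_gen[OF k l kl] by simp
      then have "taut k l y \<in> taut k l ` generate (Gt k l) ?T" by (rule imageI)
      then have sgen: "s \<in> generate Gtil (taut k l ` ?T)"
        using group_hom.generate_img[OF taut_gh[OF k l kl] T] sy by simp
      have Tsub: "taut k l ` ?T \<subseteq> carrier Gtil"
        using T hom_in_carrier[OF taut_hom[OF k l kl]] by auto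
      have Tcomm: "?c \<otimes>\<^bsub>Gtil\<^esub> t = t \<otimes>\<^bsub>Gtil\<^esub> ?c" if t: "t \<in> taut k l ` ?T" for t
      proof -
        from t obtain u where u: "u \<in> carrier Ut" and tu: "t = taut k l (phit k l u) \<or> t = taut k l (phit l k u)"
          by blast
        have e: "taut k l (phit l k u) = taut l k (phit l k u)" using taut_sym[OF k l kl phit_c2[OF k l kl u]] .
        show ?thesis using tu e C3[OF i j ij k l kl v u] C3[OF i j ij l k not_sym[OF kl] v u] by auto
      qed
      show ?thesis by (rule commute_generate[OF GT.is_group cc Tsub Tcomm sgen])
    qed
    have "?c \<otimes>\<^bsub>Gtil\<^esub> x = x \<otimes>\<^bsub>Gtil\<^esub> ?c" if x: "x \<in> carrier Gtil" for x
    proof -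
      have "x \<in> generate Gtil S" using x Gtil_gen by simp
      then show ?thesis using commute_generate[OF GT.is_group cc S_sub, of x] Scomm by blast
    qed
    then show "?c \<in> group_center Gtil" using cc by (simp add: group_center_def)
  qed
  have C4: "\<And>i j a. i \<in> I \<Longrightarrow> j \<in> I \<Longrightarrow> i \<noteq> j \<Longrightarrow> a \<in> kernel (Gt i j) (Gs (\<pi> i) (\<pi> j)) (alpha i j)
      \<Longrightarrow> taut i j a \<in> group_center Gtil"
  proof -
    fix i j a assume i: "i \<in> I" and j: "j \<in> I" and ij: "i \<noteq> j" and a: "a \<in> kernel (Gt i j) (Gs (\<pi> i) (\<pi> j)) (alpha i j)"
    let ?T = "phit i j ` Vt \<union> phit j i ` Vt"
    have T: "?T \<subseteq> carrier (Gt i j)" using phit_c[OF i j ij] phit_c2[OF i j ij] Vt_sub by auto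
    have "a \<in> generate (Gt i j) ?T" using subsetD[OF conjunct1[OF central[OF i j ij]] a] .
    then have "taut i j a \<in> taut i j ` generate (Gt i j) ?T" by (rule imageI)
    then have agen: "taut i j a \<in> generate Gtil (taut i j ` ?T)"
      using group_hom.generate_img[OF taut_gh[OF i j ij] T] by simp
    have Tc: "taut i j ` ?T \<subseteq> group_center Gtil"
    proof
      fix t assume "t \<in> taut i j ` ?T"
      then obtain v where v: "v \<in> Vt" and tv: "t = taut i j (phit i j v) \<or> t = taut i j (phit j i v)"
        by blast
      have vU: "v \<in> carrier Ut" using v Vt_sub by auto
      have e: "taut i j (phit j i v) = taut j i (phit j i v)" using taut_sym[OF i j ij phit_c2[OF i j ij vU]] .
      show "t \<in> group_center Gtil" using tv e C2[OF i j ij v] C2[OF j i not_sym[OF ij] v] by auto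
    qed
    show "taut i j a \<in> group_center Gtil"
      using subsetD[OF GT.generate_subgroup_incl[OF Tc center_subgroup[OF GT.is_group]] agen] .
  qed
  define S0 where "S0 = \<Union>{taut i j ` kernel (Gt i j) (Gs (\<pi> i) (\<pi> j)) (alpha i j) | i j. i \<in> I \<and> j \<in> I \<and> i \<noteq> j}"
  define N where "N = generate Gtil S0"
  have S0_center: "S0 \<subseteq> group_center Gtil" unfolding S0_def using C4 by blast
  have S0_sub: "S0 \<subseteq> carrier Gtil" using S0_center by (auto simp: group_center_def)
  have N_center: "N \<subseteq> group_center Gtil"
    unfolding N_def using GT.generate_subgroup_incl[OF S0_center center_subgroup[OF GT.is_group]] .
  have N_sub: "subgroup N Gtil" unfolding N_def using GT.generate_is_subgroup[OF S0_sub] .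
  interpret NN: normal N Gtil
  proof -
    have "N \<lhd> Gtil"
      unfolding GT.normal_inv_iff
    proof (intro conjI ballI N_sub)
      fix x h assume x: "x \<in> carrier Gtil" and h: "h \<in> N"
      have hc: "h \<in> carrier Gtil" and hx: "h \<otimes>\<^bsub>Gtil\<^esub> x = x \<otimes>\<^bsub>Gtil\<^esub> h"
        using N_center h x by (auto simp: group_center_def)
      have "x \<otimes>\<^bsub>Gtil\<^esub> h \<otimes>\<^bsub>Gtil\<^esub> inv\<^bsub>Gtil\<^esub> x = h \<otimes>\<^bsub>Gtil\<^esub> x \<otimes>\<^bsub>Gtil\<^esub> inv\<^bsub>Gtil\<^esub> x" using hx by simp
      also have "\<dots> = h" using hc x by (simp add: GT.m_assoc)
      finally show "x \<otimes>\<^bsub>Gtil\<^esub> h \<otimes>\<^bsub>Gtil\<^esub> inv\<^bsub>Gtil\<^esub> x \<in> N" using h by simp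
    qed
    then show "N \<lhd> Gtil" .
  qed
  have Q_grp: "group (Gtil Mod N)" by (rule NN.factorgroup_is_group)
  have kernel_N: "\<And>i j a. i \<in> I \<Longrightarrow> j \<in> I \<Longrightarrow> i \<noteq> j \<Longrightarrow> a \<in> kernel (Gt i j) (Gs (\<pi> i) (\<pi> j)) (alpha i j)
      \<Longrightarrow> taut i j a \<in> N"
  proof -
    fix i j a assume "i \<in> I" "j \<in> I" "i \<noteq> j" "a \<in> kernel (Gt i j) (Gs (\<pi> i) (\<pi> j)) (alpha i j)"
    then have "taut i j a \<in> S0" unfolding S0_def by blast
    then show "taut i j a \<in> N" unfolding N_def by (rule generate.incl)
  qed
  have pi_bij: "bij_betw \<pi> I I" using epi by (simp add: amalgam_epi_def)
  have pi_inj: "inj_on \<pi> I" using pi_bij by (rule bij_betw_imp_inj_on)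
  have pi_img: "\<pi> ` I = I" using pi_bij by (rule bij_betw_imp_surj_on)
  have pi_I: "\<And>a. a \<in> I \<Longrightarrow> \<pi> a \<in> I" using pi_img by blast
  have pi_ne: "\<And>a b. a \<in> I \<Longrightarrow> b \<in> I \<Longrightarrow> a \<noteq> b \<Longrightarrow> \<pi> a \<noteq> \<pi> b"
    using pi_inj unfolding inj_on_def by blast
  define \<sigma> where "\<sigma> = inv_into I \<pi>"
  have sig_pi: "\<And>a. a \<in> I \<Longrightarrow> \<sigma> (\<pi> a) = a" unfolding \<sigma>_def by (rule inv_into_f_f[OF pi_inj])
  have sig_I: "\<And>k. k \<in> I \<Longrightarrow> \<sigma> k \<in> I" unfolding \<sigma>_def by (rule inv_into_into) (simp add: pi_img)
  have pi_sig: "\<And>k. k \<in> I \<Longrightarrow> \<pi> (\<sigma> k) = k" unfolding \<sigma>_def by (rule f_inv_into_f) (simp add: pi_img)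
  have epi2: "\<forall>i\<in>I. \<forall>j\<in>I. i \<noteq> j \<longrightarrow>
        alpha i j \<in> hom (Gt i j) (Gs (\<pi> i) (\<pi> j)) \<and>
        alpha i j ` carrier (Gt i j) = carrier (Gs (\<pi> i) (\<pi> j)) \<and>
        (\<forall>x \<in> carrier (Gt i j). alpha i j x = alpha j i x) \<and>
        (\<forall>u \<in> carrier Ut. alpha i j (phit i j u) = phi (\<pi> i) (\<pi> j) (rho (\<pi> i) u))"
    using epi unfolding amalgam_epi_def by (elim conjE)
  have rho_surj: "\<And>i. i \<in> I \<Longrightarrow> rho i ` carrier Ut = carrier U"
    using epi unfolding amalgam_epi_def by blast
  have alpha_hom: "\<And>a b. a \<in> I \<Longrightarrow> b \<in> I \<Longrightarrow> a \<noteq> b \<Longrightarrow> alpha a b \<in> hom (Gt a b) (Gs (\<pi> a) (\<pi> b))"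
    using epi2 by blast
  have alpha_surj: "\<And>a b. a \<in> I \<Longrightarrow> b \<in> I \<Longrightarrow> a \<noteq> b \<Longrightarrow> alpha a b ` carrier (Gt a b) = carrier (Gs (\<pi> a) (\<pi> b))"
    using epi2 by blast
  have alpha_sym: "\<And>a b x. a \<in> I \<Longrightarrow> b \<in> I \<Longrightarrow> a \<noteq> b \<Longrightarrow> x \<in> carrier (Gt a b) \<Longrightarrow> alpha a b x = alpha b a x"
    using epi2 by blast
  have alpha_comp: "\<And>a b u. a \<in> I \<Longrightarrow> b \<in> I \<Longrightarrow> a \<noteq> b \<Longrightarrow> u \<in> carrier Ut \<Longrightarrow> alpha a b (phit a b u) = phi (\<pi> a) (\<pi> b) (rho (\<pi> a) u)"
    using epi2 by blast
  have tau_hom: "\<And>k l. k \<in> I \<Longrightarrow> l \<in> I \<Longrightarrow> k \<noteq> l \<Longrightarrow> tau k l \<in> hom (Gs k l) G"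
    using env by (simp add: enveloping_group_def)
  interpret AH: group_hom Gtil G alphahat
    using alphahat(1) by (simp add: group_hom_def group_hom_axioms_def GT.is_group GG.is_group)
  have N_ker: "N \<subseteq> kernel Gtil G alphahat"
  proof -
    have "S0 \<subseteq> kernel Gtil G alphahat"
    proof
      fix t assume "t \<in> S0"
      then obtain i j a where i: "i \<in> I" and j: "j \<in> I" and ij: "i \<noteq> j"
        and a: "a \<in> kernel (Gt i j) (Gs (\<pi> i) (\<pi> j)) (alpha i j)" and ta: "t = taut i j a"
        unfolding S0_def by blast
      have ac: "a \<in> carrier (Gt i j)" and a1: "alpha i j a = \<one>\<^bsub>Gs (\<pi> i) (\<pi> j)\<^esub>" using a by (auto simp: kernel_def)
      have "alphahat t = tau (\<pi> i) (\<pi> j) (alpha i j a)" using alphahat_comm[OF i j ij ac] ta by simp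
      also have "\<dots> = \<one>\<^bsub>G\<^esub>" unfolding a1
        by (rule hom_one[OF tau_hom[OF pi_I[OF i] pi_I[OF j] pi_ne[OF i j ij]] Gs_grp[OF pi_I[OF i] pi_I[OF j] pi_ne[OF i j ij]] GG.is_group])
      finally show "t \<in> kernel Gtil G alphahat"
        using hom_in_carrier[OF taut_hom[OF i j ij] ac] ta by (simp add: kernel_def)
    qed
    then show ?thesis unfolding N_def by (rule GT.generate_subgroup_incl[OF _ AH.subgroup_kernel])
  qed
  \<comment> \<open>the induced enveloping group of the quotient\<close>
  define tau' where "tau' = (\<lambda>k l g. N #>\<^bsub>Gtil\<^esub> taut (\<sigma> k) (\<sigma> l) (SOME x. x \<in> carrier (Gt (\<sigma> k) (\<sigma> l)) \<and> alpha (\<sigma> k) (\<sigma> l) x = g))"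
  have key: "\<And>a b x. a \<in> I \<Longrightarrow> b \<in> I \<Longrightarrow> a \<noteq> b \<Longrightarrow> x \<in> carrier (Gt a b)
      \<Longrightarrow> tau' (\<pi> a) (\<pi> b) (alpha a b x) = N #>\<^bsub>Gtil\<^esub> taut a b x"
  proof -
    fix a b x assume a: "a \<in> I" and b: "b \<in> I" and ab: "a \<noteq> b" and x: "x \<in> carrier (Gt a b)"
    interpret AB: group_hom "Gt a b" "Gs (\<pi> a) (\<pi> b)" "alpha a b"
      using alpha_hom[OF a b ab] Gt_grp[OF a b ab] Gs_grp[OF pi_I[OF a] pi_I[OF b] pi_ne[OF a b ab]]
      by (simp add: group_hom_def group_hom_axioms_def)
    interpret TB: group_hom "Gt a b" Gtil "taut a b" by (rule taut_gh[OF a b ab])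
    define y where "y = (SOME y. y \<in> carrier (Gt a b) \<and> alpha a b y = alpha a b x)"
    have y: "y \<in> carrier (Gt a b) \<and> alpha a b y = alpha a b x"
      unfolding y_def by (rule someI[of _ x]) (simp add: x)
    have yc: "y \<in> carrier (Gt a b)" and yx: "alpha a b y = alpha a b x" using y by auto
    have t: "tau' (\<pi> a) (\<pi> b) (alpha a b x) = N #>\<^bsub>Gtil\<^esub> taut a b y"
      unfolding tau'_def y_def sig_pi[OF a] sig_pi[OF b] ..
    have "alpha a b (y \<otimes>\<^bsub>Gt a b\<^esub> inv\<^bsub>Gt a b\<^esub> x) = alpha a b x \<otimes>\<^bsub>Gs (\<pi> a) (\<pi> b)\<^esub> inv\<^bsub>Gs (\<pi> a) (\<pi> b)\<^esub> alpha a b x"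
      using yc x yx by simp
    also have "\<dots> = \<one>\<^bsub>Gs (\<pi> a) (\<pi> b)\<^esub>" using x by simp
    finally have "y \<otimes>\<^bsub>Gt a b\<^esub> inv\<^bsub>Gt a b\<^esub> x \<in> kernel (Gt a b) (Gs (\<pi> a) (\<pi> b)) (alpha a b)"
      using yc x by (simp add: kernel_def)
    then have inN: "taut a b (y \<otimes>\<^bsub>Gt a b\<^esub> inv\<^bsub>Gt a b\<^esub> x) \<in> N" by (rule kernel_N[OF a b ab])
    have eq: "taut a b (y \<otimes>\<^bsub>Gt a b\<^esub> inv\<^bsub>Gt a b\<^esub> x) = taut a b y \<otimes>\<^bsub>Gtil\<^esub> inv\<^bsub>Gtil\<^esub> taut a b x"
      using yc x by simp
    have txc: "taut a b x \<in> carrier Gtil" and tyc: "taut a b y \<in> carrier Gtil" using x yc by simp_all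
    have "taut a b y = (taut a b y \<otimes>\<^bsub>Gtil\<^esub> inv\<^bsub>Gtil\<^esub> taut a b x) \<otimes>\<^bsub>Gtil\<^esub> taut a b x"
      using txc tyc by (simp add: GT.m_assoc)
    moreover have "(taut a b y \<otimes>\<^bsub>Gtil\<^esub> inv\<^bsub>Gtil\<^esub> taut a b x) \<otimes>\<^bsub>Gtil\<^esub> taut a b x \<in> N #>\<^bsub>Gtil\<^esub> taut a b x"
      using GT.rcosI[OF inN[unfolded eq] subgroup.subset[OF N_sub] txc] .
    ultimately have "taut a b y \<in> N #>\<^bsub>Gtil\<^esub> taut a b x" by simp
    then have "N #>\<^bsub>Gtil\<^esub> taut a b x = N #>\<^bsub>Gtil\<^esub> taut a b y"
      by (rule GT.repr_independence[OF _ txc N_sub])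
    then show "tau' (\<pi> a) (\<pi> b) (alpha a b x) = N #>\<^bsub>Gtil\<^esub> taut a b x" using t by simp
  qed
  have coset_c: "\<And>z. z \<in> carrier Gtil \<Longrightarrow> N #>\<^bsub>Gtil\<^esub> z \<in> carrier (Gtil Mod N)"
    by (simp add: carrier_FactGroup)
  have tau'_hom_pi: "\<And>a b. a \<in> I \<Longrightarrow> b \<in> I \<Longrightarrow> a \<noteq> b \<Longrightarrow> tau' (\<pi> a) (\<pi> b) \<in> hom (Gs (\<pi> a) (\<pi> b)) (Gtil Mod N)"
  proof -
    fix a b assume a: "a \<in> I" and b: "b \<in> I" and ab: "a \<noteq> b"
    interpret AB: group_hom "Gt a b" "Gs (\<pi> a) (\<pi> b)" "alpha a b"
      using alpha_hom[OF a b ab] Gt_grp[OF a b ab] Gs_grp[OF pi_I[OF a] pi_I[OF b] pi_ne[OF a b ab]]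
      by (simp add: group_hom_def group_hom_axioms_def)
    interpret TB: group_hom "Gt a b" Gtil "taut a b" by (rule taut_gh[OF a b ab])
    show "tau' (\<pi> a) (\<pi> b) \<in> hom (Gs (\<pi> a) (\<pi> b)) (Gtil Mod N)"
      unfolding hom_def
    proof (intro CollectI conjI funcsetI ballI)
      fix g assume "g \<in> carrier (Gs (\<pi> a) (\<pi> b))"
      then obtain x where x: "x \<in> carrier (Gt a b)" and gx: "g = alpha a b x"
        using alpha_surj[OF a b ab] by blast
      show "tau' (\<pi> a) (\<pi> b) g \<in> carrier (Gtil Mod N)"
        unfolding gx key[OF a b ab x] using x by (simp add: coset_c)
    next
      fix g h assume "g \<in> carrier (Gs (\<pi> a) (\<pi> b))" "h \<in> carrier (Gs (\<pi> a) (\<pi> b))"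
      then obtain x y where x: "x \<in> carrier (Gt a b)" and gx: "g = alpha a b x"
          and y: "y \<in> carrier (Gt a b)" and hy: "h = alpha a b y"
        using alpha_surj[OF a b ab] by blast
      have gh: "g \<otimes>\<^bsub>Gs (\<pi> a) (\<pi> b)\<^esub> h = alpha a b (x \<otimes>\<^bsub>Gt a b\<^esub> y)" using x y gx hy by simp
      have xy: "x \<otimes>\<^bsub>Gt a b\<^esub> y \<in> carrier (Gt a b)" using x y by simp
      have "tau' (\<pi> a) (\<pi> b) (g \<otimes>\<^bsub>Gs (\<pi> a) (\<pi> b)\<^esub> h) = N #>\<^bsub>Gtil\<^esub> taut a b (x \<otimes>\<^bsub>Gt a b\<^esub> y)"
        unfolding gh by (rule key[OF a b ab xy])
      also have "\<dots> = N #>\<^bsub>Gtil\<^esub> (taut a b x \<otimes>\<^bsub>Gtil\<^esub> taut a b y)" using x y by simp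
      also have "\<dots> = (N #>\<^bsub>Gtil\<^esub> taut a b x) <#>\<^bsub>Gtil\<^esub> (N #>\<^bsub>Gtil\<^esub> taut a b y)"
        using x y by (simp add: NN.rcos_sum)
      also have "\<dots> = tau' (\<pi> a) (\<pi> b) g \<otimes>\<^bsub>Gtil Mod N\<^esub> tau' (\<pi> a) (\<pi> b) h"
        using key[OF a b ab] x y gx hy by simp
      finally show "tau' (\<pi> a) (\<pi> b) (g \<otimes>\<^bsub>Gs (\<pi> a) (\<pi> b)\<^esub> h) = tau' (\<pi> a) (\<pi> b) g \<otimes>\<^bsub>Gtil Mod N\<^esub> tau' (\<pi> a) (\<pi> b) h" .
    qed
  qed
  have pre: "\<And>k l. k \<in> I \<Longrightarrow> l \<in> I \<Longrightarrow> k \<noteq> l \<Longrightarrow> \<sigma> k \<in> I \<and> \<sigma> l \<in> I \<and> \<sigma> k \<noteq> \<sigma> l \<and> \<pi> (\<sigma> k) = k \<and> \<pi> (\<sigma> l) = l"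
    using sig_I pi_sig by metis
  have tau'_hom: "\<And>k l. k \<in> I \<Longrightarrow> l \<in> I \<Longrightarrow> k \<noteq> l \<Longrightarrow> tau' k l \<in> hom (Gs k l) (Gtil Mod N)"
  proof -
    fix k l assume "k \<in> I" "l \<in> I" "k \<noteq> l"
    then have p: "\<sigma> k \<in> I" "\<sigma> l \<in> I" "\<sigma> k \<noteq> \<sigma> l" "\<pi> (\<sigma> k) = k" "\<pi> (\<sigma> l) = l" using pre by auto
    show "tau' k l \<in> hom (Gs k l) (Gtil Mod N)" using tau'_hom_pi[OF p(1-3)] unfolding p(4,5) .
  qed
  have tau'_sym: "\<And>k l g. k \<in> I \<Longrightarrow> l \<in> I \<Longrightarrow> k \<noteq> l \<Longrightarrow> g \<in> carrier (Gs k l) \<Longrightarrow> tau' k l g = tau' l k g"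
  proof -
    fix k l g assume "k \<in> I" "l \<in> I" "k \<noteq> l" and g: "g \<in> carrier (Gs k l)"
    then have p: "\<sigma> k \<in> I" "\<sigma> l \<in> I" "\<sigma> k \<noteq> \<sigma> l" "\<pi> (\<sigma> k) = k" "\<pi> (\<sigma> l) = l" using pre by auto
    define a where "a = \<sigma> k"
    define b where "b = \<sigma> l"
    have a: "a \<in> I" and b: "b \<in> I" and ab: "a \<noteq> b" and ka: "k = \<pi> a" and lb: "l = \<pi> b"
      using p by (auto simp: a_def b_def)
    obtain x where x: "x \<in> carrier (Gt a b)" and gx: "g = alpha a b x"
      using g alpha_surj[OF a b ab] unfolding ka lb by blast
    have xba: "x \<in> carrier (Gt b a)" using x Gt_sym[OF a b ab] by simp
    have "tau' k l g = N #>\<^bsub>Gtil\<^esub> taut a b x" unfolding ka lb gx by (rule key[OF a b ab x])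
    also have "\<dots> = N #>\<^bsub>Gtil\<^esub> taut b a x" using taut_sym[OF a b ab x] by simp
    also have "\<dots> = tau' (\<pi> b) (\<pi> a) (alpha b a x)" by (rule key[OF b a not_sym[OF ab] xba, symmetric])
    also have "\<dots> = tau' l k g" unfolding ka lb gx alpha_sym[OF a b ab x] ..
    finally show "tau' k l g = tau' l k g" .
  qed
  have tau'_rel: "\<And>i j k u. i \<in> I \<Longrightarrow> j \<in> I \<Longrightarrow> k \<in> I \<Longrightarrow> i \<noteq> j \<Longrightarrow> j \<noteq> k \<Longrightarrow> i \<noteq> k \<Longrightarrow> u \<in> carrier U
      \<Longrightarrow> tau' i j (phi j i u) = tau' k j (phi j k u)"
  proof -
    fix i j k u assume i: "i \<in> I" and j: "j \<in> I" and k: "k \<in> I" and ij: "i \<noteq> j" and jk: "j \<noteq> k" and ik: "i \<noteq> k"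
      and u: "u \<in> carrier U"
    define a where "a = \<sigma> i"
    define b where "b = \<sigma> j"
    define c where "c = \<sigma> k"
    have a: "a \<in> I" and b: "b \<in> I" and c: "c \<in> I" and ia: "i = \<pi> a" and jb: "j = \<pi> b" and kc: "k = \<pi> c"
      using sig_I pi_sig i j k by (auto simp: a_def b_def c_def)
    have ab: "a \<noteq> b" and cb: "c \<noteq> b" using ij jk ia jb kc by auto
    obtain w where w: "w \<in> carrier Ut" and uw: "u = rho j w" using u rho_surj[OF j] by blast
    have side: "tau' (\<pi> a) (\<pi> b) (phi (\<pi> b) (\<pi> a) (rho (\<pi> b) w)) = N #>\<^bsub>Gtil\<^esub> taut a b (phit b a w)"
      if a: "a \<in> I" and b: "b \<in> I" and ab: "a \<noteq> b" for a b
    proof -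
      have "phi (\<pi> b) (\<pi> a) (rho (\<pi> b) w) = alpha b a (phit b a w)"
        using alpha_comp[OF b a not_sym[OF ab] w] by simp
      also have "\<dots> = alpha a b (phit b a w)"
        using alpha_sym[OF a b ab phit_c2[OF a b ab w]] by simp
      finally show ?thesis using key[OF a b ab phit_c2[OF a b ab w]] by simp
    qed
    have "tau' i j (phi j i u) = N #>\<^bsub>Gtil\<^esub> taut a b (phit b a w)"
      unfolding uw ia jb by (rule side[OF a b ab])
    also have "\<dots> = N #>\<^bsub>Gtil\<^esub> taut c b (phit b c w)"
      using taut_psi[OF a b c ab cb w] by simp
    also have "\<dots> = tau' k j (phi j k u)"
      unfolding uw kc jb by (rule side[OF c b cb, symmetric])
    finally show "tau' i j (phi j i u) = tau' k j (phi j k u)" .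
  qed
  have q_hom: "(\<lambda>z. N #>\<^bsub>Gtil\<^esub> z) \<in> hom Gtil (Gtil Mod N)" by (rule NN.r_coset_hom_Mod)
  have q_gh: "group_hom Gtil (Gtil Mod N) (\<lambda>z. N #>\<^bsub>Gtil\<^esub> z)"
    using q_hom Q_grp by (simp add: group_hom_def group_hom_axioms_def GT.is_group)
  define S' where "S' = \<Union>{tau' k l ` carrier (Gs k l) | k l. k \<in> I \<and> l \<in> I \<and> k \<noteq> l}"
  have qS: "(\<lambda>z. N #>\<^bsub>Gtil\<^esub> z) ` S = S'"
  proof
    show "(\<lambda>z. N #>\<^bsub>Gtil\<^esub> z) ` S \<subseteq> S'"
    proof
      fix t assume "t \<in> (\<lambda>z. N #>\<^bsub>Gtil\<^esub> z) ` S"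
      then obtain a b y where a: "a \<in> I" and b: "b \<in> I" and ab: "a \<noteq> b" and y: "y \<in> carrier (Gt a b)"
        and ty: "t = N #>\<^bsub>Gtil\<^esub> taut a b y"
        unfolding S_def by blast
      have "t = tau' (\<pi> a) (\<pi> b) (alpha a b y)" using key[OF a b ab y] ty by simp
      moreover have "alpha a b y \<in> carrier (Gs (\<pi> a) (\<pi> b))" using alpha_surj[OF a b ab] y by blast
      ultimately have "t \<in> tau' (\<pi> a) (\<pi> b) ` carrier (Gs (\<pi> a) (\<pi> b))" by simp
      moreover have "\<pi> a \<in> I" "\<pi> b \<in> I" "\<pi> a \<noteq> \<pi> b" using pi_I[OF a] pi_I[OF b] pi_ne[OF a b ab] .
      ultimately show "t \<in> S'" unfolding S'_def by blast
    qed
  next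
    show "S' \<subseteq> (\<lambda>z. N #>\<^bsub>Gtil\<^esub> z) ` S"
    proof
      fix t assume "t \<in> S'"
      then obtain k l g where k: "k \<in> I" and l: "l \<in> I" and kl: "k \<noteq> l" and g: "g \<in> carrier (Gs k l)"
        and tg: "t = tau' k l g"
        unfolding S'_def by blast
      then have p: "\<sigma> k \<in> I" "\<sigma> l \<in> I" "\<sigma> k \<noteq> \<sigma> l" "\<pi> (\<sigma> k) = k" "\<pi> (\<sigma> l) = l" using pre by auto
      define a where "a = \<sigma> k"
      define b where "b = \<sigma> l"
      have a: "a \<in> I" and b: "b \<in> I" and ab: "a \<noteq> b" and ka: "k = \<pi> a" and lb: "l = \<pi> b"
        using p by (auto simp: a_def b_def)
      obtain x where x: "x \<in> carrier (Gt a b)" and gx: "g = alpha a b x"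
        using g alpha_surj[OF a b ab] unfolding ka lb by blast
      have "t = N #>\<^bsub>Gtil\<^esub> taut a b x" unfolding tg ka lb gx by (rule key[OF a b ab x])
      moreover have "taut a b x \<in> S" unfolding S_def using a b ab x by blast
      ultimately show "t \<in> (\<lambda>z. N #>\<^bsub>Gtil\<^esub> z) ` S" by blast
    qed
  qed
  have Q_gen: "generate (Gtil Mod N) S' = carrier (Gtil Mod N)"
  proof -
    have "carrier (Gtil Mod N) = (\<lambda>z. N #>\<^bsub>Gtil\<^esub> z) ` carrier Gtil" by (rule carrier_FactGroup)
    also have "\<dots> = (\<lambda>z. N #>\<^bsub>Gtil\<^esub> z) ` generate Gtil S" using Gtil_gen by simp
    also have "\<dots> = generate (Gtil Mod N) ((\<lambda>z. N #>\<^bsub>Gtil\<^esub> z) ` S)"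
      by (rule group_hom.generate_img[OF q_gh S_sub, symmetric])
    finally show ?thesis using qS by simp
  qed
  have env': "enveloping_group U I Gs phi (Gtil Mod N) tau'"
    unfolding enveloping_group_def
  proof (intro conjI)
    show "group (Gtil Mod N)" by (rule Q_grp)
    show "\<forall>i\<in>I. \<forall>j\<in>I. i \<noteq> j \<longrightarrow> tau' i j \<in> hom (Gs i j) (Gtil Mod N) \<and> (\<forall>x\<in>carrier (Gs i j). tau' i j x = tau' j i x)"
      using tau'_hom tau'_sym by blast
    show "generate (Gtil Mod N) (\<Union> {tau' i j ` carrier (Gs i j) |i j. i \<in> I \<and> j \<in> I \<and> i \<noteq> j}) = carrier (Gtil Mod N)"
      using Q_gen unfolding S'_def .
    show "\<forall>i\<in>I. \<forall>j\<in>I. \<forall>k\<in>I. i \<noteq> j \<and> j \<noteq> k \<and> i \<noteq> k \<longrightarrow> (\<forall>u\<in>carrier U. tau' i j (phi j i u) = tau' k j (phi j k u))"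
      using tau'_rel by blast
  qed
  have "\<exists>p. env_epi I Gs G tau (Gtil Mod N) tau' p"
    using univ2 env' unfolding universal_enveloping_def by blast
  then obtain p where p: "env_epi I Gs G tau (Gtil Mod N) tau' p" by blast
  have p_hom: "p \<in> hom G (Gtil Mod N)" using p by (simp add: env_epi_def)
  have p_tau: "\<And>k l g. k \<in> I \<Longrightarrow> l \<in> I \<Longrightarrow> k \<noteq> l \<Longrightarrow> g \<in> carrier (Gs k l) \<Longrightarrow> p (tau k l g) = tau' k l g"
    using p unfolding env_epi_def by blast
  have f_hom: "(\<lambda>z. p (alphahat z)) \<in> hom Gtil (Gtil Mod N)"
    unfolding hom_def
  proof (intro CollectI conjI funcsetI ballI)
    fix z assume "z \<in> carrier Gtil"
    then show "p (alphahat z) \<in> carrier (Gtil Mod N)"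
      using hom_in_carrier[OF p_hom hom_in_carrier[OF alphahat(1)]] by blast
  next
    fix z w assume z: "z \<in> carrier Gtil" and w: "w \<in> carrier Gtil"
    then show "p (alphahat (z \<otimes>\<^bsub>Gtil\<^esub> w)) = p (alphahat z) \<otimes>\<^bsub>Gtil Mod N\<^esub> p (alphahat w)"
      using hom_mult[OF p_hom] hom_in_carrier[OF alphahat(1)] by simp
  qed
  have agree: "\<And>z. z \<in> carrier Gtil \<Longrightarrow> p (alphahat z) = N #>\<^bsub>Gtil\<^esub> z"
  proof -
    fix z assume z: "z \<in> carrier Gtil"
    have agS: "p (alphahat s) = N #>\<^bsub>Gtil\<^esub> s" if s: "s \<in> S" for s
    proof -
      obtain a b y where a: "a \<in> I" and b: "b \<in> I" and ab: "a \<noteq> b" and y: "y \<in> carrier (Gt a b)" and sy: "s = taut a b y"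
        using s unfolding S_def by blast
      have ay: "alpha a b y \<in> carrier (Gs (\<pi> a) (\<pi> b))" using alpha_surj[OF a b ab] y by blast
      have "p (alphahat s) = p (tau (\<pi> a) (\<pi> b) (alpha a b y))" using alphahat_comm[OF a b ab y] sy by simp
      also have "\<dots> = tau' (\<pi> a) (\<pi> b) (alpha a b y)"
        by (rule p_tau[OF pi_I[OF a] pi_I[OF b] pi_ne[OF a b ab] ay])
      also have "\<dots> = N #>\<^bsub>Gtil\<^esub> s" using key[OF a b ab y] sy by simp
      finally show ?thesis .
    qed
    have "z \<in> generate Gtil S" using z Gtil_gen by simp
    then show "p (alphahat z) = N #>\<^bsub>Gtil\<^esub> z"
      using hom_agree_generate[OF GT.is_group Q_grp f_hom q_hom S_sub agS, of z] by simp
  qed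
  have ker_N: "kernel Gtil G alphahat \<subseteq> N"
  proof
    fix z assume "z \<in> kernel Gtil G alphahat"
    then have z: "z \<in> carrier Gtil" and z1: "alphahat z = \<one>\<^bsub>G\<^esub>" by (auto simp: kernel_def)
    have "N #>\<^bsub>Gtil\<^esub> z = p \<one>\<^bsub>G\<^esub>" using agree[OF z] z1 by simp
    also have "\<dots> = \<one>\<^bsub>Gtil Mod N\<^esub>" by (rule hom_one[OF p_hom GG.is_group Q_grp])
    also have "\<dots> = N" by simp
    finally have "N #>\<^bsub>Gtil\<^esub> z = N" .
    then show "z \<in> N" using GT.rcos_self[OF z N_sub] by simp
  qed
  have NK: "N = kernel Gtil G alphahat" using N_ker ker_N by blast
  have iso: "(\<lambda>C. the_elem (alphahat ` C)) \<in> iso (Gtil Mod N) G"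
    using AH.FactGroup_iso_set[OF alphahat(2)] unfolding NK[symmetric] .
  show ?thesis
    unfolding Let_def S0_def[symmetric] N_def[symmetric]
    using N_center NK iso by blast
qed


end
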